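(* Let $a, b, n$ be positive integers with $b>1$, $n>1$ and $\gcd(r_b(n),a)=1$. Then the numerical semigroup $S_a(b,n)$ is homogeneous.
   Context: For an integer $\ell \ge 1$, $r_b(\ell) = \sum_{j=0}^{\ell-1} b^j$, and $r_b(0)=0$. For $i \ge 1$, $a_i := r_b(n) + a\, r_b(i-1)$; $S_a(b,n)$ is the numerical semigroup generated by $\{a_i\}$, minimally generated by $a_1,\ldots,a_n$. For a numerical semigroup $S$ minimally generated by $\{g_1,\ldots,g_e\}$ and $s\in S$, the set of lengths is $\mathsf{L}_S(s) = \{\sum_j u_j : s = \sum_j u_j g_j,\ u_j \in \mathbb{N}\}$. $S$ is homogeneous if $\mathsf{L}_S(s)$ is a singleton for every $s \in \operatorname{Ap}(S) = \{\omega\in S: \omega - \operatorname{m}(S)\notin S\}$, with $\operatorname{m}(S)$ the multiplicity (smallest nonzero element). *)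

theory Defs
  imports Main
begin

definition repunit :: "nat \<Rightarrow> nat \<Rightarrow> nat" where
  "repunit b l = (\<Sum>j<l. b ^ j)"

inductive_set monoid_gen :: "nat set \<Rightarrow> nat set" for A where
  zero: "0 \<in> monoid_gen A"
| add: "x \<in> A \<Longrightarrow> y \<in> monoid_gen A \<Longrightarrow> x + y \<in> monoid_gen A"

definition numerical_semigroup :: "nat set \<Rightarrow> bool" where
  "numerical_semigroup S \<longleftrightarrow> 0 \<in> S \<and> (\<forall>x\<in>S. \<forall>y\<in>S. x + y \<in> S) \<and> finite (UNIV - S)"

definition gen_a :: "nat \<Rightarrow> nat \<Rightarrow> nat \<Rightarrow> nat \<Rightarrow> nat" where
  "gen_a a b n i = repunit b n + a * repunit b (i - 1)"

definition S_abn :: "nat \<Rightarrow> nat \<Rightarrow> nat \<Rightarrow> nat set" where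
  "S_abn a b n = monoid_gen {gen_a a b n i | i. i \<ge> 1}"

definition min_gens :: "nat set \<Rightarrow> nat set" where
  "min_gens S = {x \<in> S. x \<noteq> 0 \<and> \<not> (\<exists>y\<in>S. \<exists>z\<in>S. y \<noteq> 0 \<and> z \<noteq> 0 \<and> x = y + z)}"

definition multiplicity_ns :: "nat set \<Rightarrow> nat" where
  "multiplicity_ns S = (LEAST x. x \<in> S \<and> x \<noteq> 0)"

definition apery :: "nat set \<Rightarrow> nat set" where
  "apery S = {w \<in> S. \<not> (w \<ge> multiplicity_ns S \<and> w - multiplicity_ns S \<in> S)}"

definition lengths :: "nat set \<Rightarrow> nat \<Rightarrow> nat set" where
  "lengths S s = {(\<Sum>g\<in>min_gens S. u g) | u. s = (\<Sum>g\<in>min_gens S. u g * g)}"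

definition homogeneous :: "nat set \<Rightarrow> bool" where
  "homogeneous S \<longleftrightarrow> (\<forall>s\<in>apery S. \<exists>l. lengths S s = {l})"

end

theory Submission
  imports Defs "HOL-Library.Multiset"
begin

lemma repunit_0[simp]: "repunit b 0 = 0" by (simp add: repunit_def)

lemma repunit_Suc: "repunit b (Suc l) = repunit b l + b ^ l"
  by (simp add: repunit_def)

lemma repunit_mult: assumes "b \<ge> 1" shows "(b - 1) * repunit b l + 1 = b ^ l"
proof (induction l)
  case 0 then show ?case by simp
next
  case (Suc l)
  obtain c where c: "b = Suc c" using assms by (cases b) auto
  from Suc show ?case by (simp add: repunit_Suc c algebra_simps)
qed

lemma repunit_add: "repunit b (m + l) = repunit b m + b ^ m * repunit b l"
  by (induction l) (simp_all add: repunit_Suc power_add algebra_simps)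

lemma repunit_less: assumes "b \<ge> 1" "e < n" shows "repunit b e < repunit b n"
  using assms(2)
proof (induction n)
  case 0 then show ?case by simp
next
  case (Suc n)
  have "b ^ n > 0" using assms(1) by simp
  then show ?case using Suc by (cases "e = n") (auto simp: repunit_Suc)
qed

lemma monoid_gen_add: "x \<in> monoid_gen A \<Longrightarrow> y \<in> monoid_gen A \<Longrightarrow> x + y \<in> monoid_gen A"
  by (induction x rule: monoid_gen.induct) (auto simp: add.assoc intro: monoid_gen.add)

lemma mset_sum_count:
  "finite A \<Longrightarrow> set_mset X \<subseteq> A \<Longrightarrow> sum_mset (image_mset f X) = (\<Sum>e\<in>A. count X e * (f e :: nat))"
proof (induction X)
  case empty show ?case by simp
next
  case (add x X)
  then have xA: "x \<in> A" and XA: "set_mset X \<subseteq> A" by auto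
  have "(\<Sum>e\<in>A. count (add_mset x X) e * f e) = (\<Sum>e\<in>A. count X e * f e + (if e = x then f e else 0))"
    by (rule sum.cong) auto
  also have "\<dots> = (\<Sum>e\<in>A. count X e * f e) + f x" using xA add.prems(1) by (simp add: sum.distrib)
  finally show ?case using add XA by simp
qed

lemma mset_build:
  "sum_mset (image_mset f (\<Sum>e<(k::nat). replicate_mset (c e) e)) = (\<Sum>e<k. c e * (f e :: nat))
   \<and> set_mset (\<Sum>e<k. replicate_mset (c e) e) \<subseteq> {..<k}"
  by (induction k) auto

lemma size_as_sum: "size (X :: 'a multiset) = sum_mset (image_mset (\<lambda>_. 1::nat) X)"
  by (induction X) auto

locale RS =
  fixes a b n :: nat
  assumes a_pos: "a > 0" and b_gt: "b > 1" and n_gt: "n > 1" and cop: "coprime (repunit b n) a"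
begin

abbreviation "R \<equiv> repunit b n"
definition h :: "nat \<Rightarrow> nat" where "h e = R + a * repunit b e"
abbreviation "S \<equiv> S_abn a b n"
definition gsum :: "nat multiset \<Rightarrow> nat" where "gsum X = sum_mset (image_mset h X)"
definition pv :: "nat multiset \<Rightarrow> nat" where "pv X = sum_mset (image_mset (\<lambda>e. b ^ e) X)"
definition rsum :: "nat multiset \<Rightarrow> nat" where "rsum X = sum_mset (image_mset (repunit b) X)"
definition wit :: "nat multiset \<Rightarrow> bool" where "wit X \<longleftrightarrow> 0 \<in># X \<or> (\<exists>e\<in>#X. e \<ge> n)"

lemma gsum_simps[simp]: "gsum {#} = 0" "gsum (add_mset x X) = h x + gsum X" "gsum (X + Y) = gsum X + gsum Y"
  by (simp_all add: gsum_def)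
lemma pv_simps[simp]: "pv {#} = 0" "pv (add_mset x X) = b ^ x + pv X" "pv (X + Y) = pv X + pv Y"
  by (simp_all add: pv_def)
lemma rsum_simps[simp]: "rsum {#} = 0" "rsum (add_mset x X) = repunit b x + rsum X" "rsum (X + Y) = rsum X + rsum Y"
  by (simp_all add: rsum_def)

lemma gsum_rep[simp]: "gsum (replicate_mset k e) = k * h e" by (induction k) auto
lemma pv_rep[simp]: "pv (replicate_mset k e) = k * b ^ e" by (induction k) auto

lemma gens_eq: "{gen_a a b n i | i. i \<ge> 1} = range h"
proof -
  have 1: "gen_a a b n i = h (i - 1)" for i by (simp add: gen_a_def h_def)
  have 2: "h e = gen_a a b n (Suc e)" for e by (simp add: gen_a_def h_def)
  show ?thesis
  proof (rule set_eqI, rule iffI)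
    fix x assume "x \<in> {gen_a a b n i | i. i \<ge> 1}"
    then obtain i where "x = gen_a a b n i" "i \<ge> 1" by auto
    then show "x \<in> range h" using 1 by auto
  next
    fix x assume "x \<in> range h"
    then obtain e where "x = h e" by auto
    then have "x = gen_a a b n (Suc e) \<and> Suc e \<ge> 1" using 2 by simp
    then show "x \<in> {gen_a a b n i | i. i \<ge> 1}" by blast
  qed
qed

lemma S_eq: "S = monoid_gen (range h)" by (simp only: S_abn_def gens_eq)

lemma h_in_S: "h e \<in> S"
  unfolding S_eq using monoid_gen.add[of "h e" "range h" 0] monoid_gen.zero by simp

lemma gsum_in_S: "gsum X \<in> S"
proof (induction X)
  case empty then show ?case by (simp add: S_eq monoid_gen.zero)
next
  case (add x X) then show ?case by (simp add: S_eq monoid_gen.add)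
qed

lemma S_add: "x \<in> S \<Longrightarrow> y \<in> S \<Longrightarrow> x + y \<in> S"
  unfolding S_eq by (rule monoid_gen_add)

lemma R_pos: "R > 0" using repunit_less[of b 0 n] b_gt n_gt by simp

lemma h0: "h 0 = R" by (simp add: h_def)
lemma h_ge: "h e \<ge> R" by (simp add: h_def)

lemma h_shift: "h (m + n) = h m + (a * b ^ m) * R"
  by (simp add: h_def repunit_add algebra_simps)

lemma h_mono: "e < e' \<Longrightarrow> h e < h e'"
  using repunit_less[of b e e'] b_gt a_pos by (simp add: h_def)

lemma gsum_sz: "gsum X = size X * R + a * rsum X"
  by (induction X) (auto simp: h_def algebra_simps)

lemma pv_sz: "pv X = (b - 1) * rsum X + size X"
proof (induction X)
  case empty then show ?case by simp
next
  case (add x X)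
  have "(b - 1) * repunit b x + 1 = b ^ x" using repunit_mult b_gt by simp
  then show ?case using add by (simp add: algebra_simps)
qed

lemma gsum_pv: "(b - 1) * gsum X + a * size X = size X * ((b - 1) * R) + a * pv X"
proof -
  have "(b - 1) * R + 1 = b ^ n" using repunit_mult b_gt by simp
  have "(b - 1) * gsum X + a * size X = (b - 1) * (size X * R) + a * ((b - 1) * rsum X + size X)"
    by (simp add: gsum_sz algebra_simps)
  also have "\<dots> = size X * ((b - 1) * R) + a * pv X" by (simp add: pv_sz algebra_simps)
  finally show ?thesis .
qed

lemma S_elem: "x \<in> S \<Longrightarrow> \<exists>X. x = gsum X"
  unfolding S_eq
proof (induction x rule: monoid_gen.induct)
  case zero then show ?case by (intro exI[of _ "{#}"]) simp
next
  case (add x y)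
  then obtain e Y where "x = h e" "y = gsum Y" by auto
  then show ?case by (intro exI[of _ "add_mset e Y"]) simp
qed

lemma reduce: "\<exists>X. set_mset X \<subseteq> {..<n} \<and> gsum X = h e"
proof (induction e rule: less_induct)
  case (less e)
  show ?case
  proof (cases "e < n")
    case True then show ?thesis by (intro exI[of _ "{#e#}"]) simp
  next
    case False
    then obtain m where m: "e = m + n" by (metis add.commute le_add_diff_inverse not_less)
    have "m < e" using m n_gt by simp
    then obtain X where X: "set_mset X \<subseteq> {..<n}" "gsum X = h m" using less by blast
    have "set_mset (X + replicate_mset (a * b ^ m) 0) \<subseteq> {..<n}" using X n_gt by auto
    moreover have "gsum (X + replicate_mset (a * b ^ m) 0) = h e"
      using X by (simp add: m h_shift h0)
    ultimately show ?thesis by blast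
  qed
qed

lemma S_elem_red: "x \<in> S \<Longrightarrow> \<exists>X. set_mset X \<subseteq> {..<n} \<and> x = gsum X"
proof -
  assume "x \<in> S"
  then obtain X where X: "x = gsum X" using S_elem by blast
  have "\<exists>Y. set_mset Y \<subseteq> {..<n} \<and> gsum X = gsum Y"
  proof (induction X)
    case empty then show ?case by (intro exI[of _ "{#}"]) simp
  next
    case (add e X)
    then obtain Y where Y: "set_mset Y \<subseteq> {..<n}" "gsum X = gsum Y" by blast
    obtain Z where Z: "set_mset Z \<subseteq> {..<n}" "gsum Z = h e" using reduce by blast
    show ?case by (intro exI[of _ "Z + Y"]) (use Y Z in auto)
  qed
  then show ?thesis using X by auto
qed

lemma nonzero_ge: "x \<in> S \<Longrightarrow> x \<noteq> 0 \<Longrightarrow> x \<ge> R"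
proof -
  assume "x \<in> S" "x \<noteq> 0"
  then obtain X where X: "x = gsum X" using S_elem by blast
  with \<open>x \<noteq> 0\<close> obtain e X' where "X = add_mset e X'" by (cases X) auto
  then show "x \<ge> R" using X h_ge[of e] by simp
qed

lemma mult_eq: "multiplicity_ns S = R"
  unfolding multiplicity_ns_def
proof (rule Least_equality)
  show "R \<in> S \<and> R \<noteq> 0" using h_in_S[of 0] h0 R_pos by simp
  show "\<And>y. y \<in> S \<and> y \<noteq> 0 \<Longrightarrow> R \<le> y" using nonzero_ge by blast
qed

lemma witness: assumes "s = gsum W" "wit W" shows "s \<ge> R \<and> s - R \<in> S"
proof -
  from assms(2) consider "0 \<in># W" | e where "e \<in># W" "e \<ge> n" unfolding wit_def by blast
  then show ?thesis
  proof cases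
    case 1
    then obtain W' where "W = add_mset 0 W'" by (metis multi_member_split)
    then show ?thesis using assms(1) gsum_in_S[of W'] by (simp add: h0)
  next
    case 2
    then obtain W' where W: "W = add_mset e W'" by (metis multi_member_split)
    obtain m where m: "e = m + n" using 2 by (metis add.commute le_add_diff_inverse)
    have pos: "a * b ^ m \<ge> 1" using a_pos b_gt by simp
    obtain k where k: "a * b ^ m = Suc k" using pos by (cases "a * b ^ m") auto
    have s: "s = gsum W' + h m + k * R + R"
      using assms(1) by (simp add: W m h_shift k)
    have "gsum W' + h m + k * R \<in> S"
      using gsum_in_S[of W'] h_in_S[of m] gsum_in_S[of "replicate_mset k 0"]
      by (simp add: S_add h0)
    then show ?thesis using s by simp
  qed
qed

lemma pv_ge: "(\<forall>e\<in>#M. e \<ge> 1) \<Longrightarrow> pv M \<ge> b * size M"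
proof (induction M)
  case empty then show ?case by simp
next
  case (add x M)
  have "b ^ x \<ge> b" using add.prems b_gt by (simp add: self_le_power)
  then show ?case using add by simp
qed

lemma pv_all0: "(\<forall>e\<in>#M. e = 0) \<Longrightarrow> pv M = size M"
  by (induction M) auto

lemma pigeon: assumes "\<forall>e\<in>#M. e < n" "\<forall>e. count M e < b" shows "pv M < b ^ n"
proof -
  have "pv M = (\<Sum>e<n. count M e * b ^ e)"
    unfolding pv_def using assms(1) by (intro mset_sum_count) auto
  also have "\<dots> \<le> (\<Sum>e<n. (b - 1) * b ^ e)"
  proof (intro sum_mono mult_right_mono)
    fix e show "count M e \<le> b - 1" using assms(2)[rule_format, of e] by linarith
  qed simp
  also have "\<dots> = (b - 1) * R" by (simp add: repunit_def sum_distrib_left)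
  also have "\<dots> < b ^ n" using repunit_mult[of b n] b_gt by simp
  finally show ?thesis .
qed

lemma merge: "(\<forall>e\<in>#M. e \<ge> 1) \<Longrightarrow> pv M > b ^ n \<Longrightarrow>
  \<exists>N j. (\<forall>e\<in>#N. e \<ge> 1) \<and> pv N = pv M \<and> size M = size N + j * (b - 1) \<and> (\<exists>e\<in>#N. e \<ge> n)"
proof (induction M rule: measure_induct_rule[where f=size])
  case (less M)
  show ?case
  proof (cases "\<exists>e\<in>#M. e \<ge> n")
    case True then show ?thesis using less.prems by (intro exI[of _ M] exI[of _ 0]) auto
  next
    case False
    have "\<exists>e. count M e \<ge> b"
    proof (rule ccontr)
      assume "\<not> (\<exists>e. count M e \<ge> b)"
      then have "\<forall>e. count M e < b" by (meson not_le)
      then have "pv M < b ^ n" using pigeon False by (simp add: not_le)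
      with less.prems(2) show False by simp
    qed
    then obtain e where ce: "count M e \<ge> b" by auto
    then have "replicate_mset b e \<subseteq># M" by (simp add: count_le_replicate_mset_subset_eq)
    then obtain M0 where M: "M = replicate_mset b e + M0" by (auto simp: mset_subset_eq_exists_conv)
    have "e \<in># M" using M b_gt by simp
    then have e1: "e \<ge> 1" using less.prems(1) by auto
    define M1 where "M1 = add_mset (Suc e) M0"
    have sz: "size M1 < size M" using M b_gt by (simp add: M1_def)
    have pos: "\<forall>e\<in>#M1. e \<ge> 1" using less.prems(1) M by (auto simp: M1_def)
    have pv1: "pv M1 = pv M" by (simp add: M1_def M)
    have "\<exists>N j. (\<forall>e\<in>#N. e \<ge> 1) \<and> pv N = pv M1 \<and> size M1 = size N + j * (b - 1) \<and> (\<exists>e\<in>#N. e \<ge> n)"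
      using less.IH[OF sz pos] less.prems(2) pv1 by simp
    then obtain N j where N: "\<forall>e\<in>#N. e\<ge>1" "pv N = pv M1" "size M1 = size N + j*(b-1)" "\<exists>e\<in>#N. e \<ge> n"
      by blast
    have "size M = size N + Suc j * (b - 1)"
      using N(3) M b_gt by (simp add: M1_def)
    then show ?thesis using N pv1 by (intro exI[of _ N] exI[of _ "Suc j"]) simp
  qed
qed

lemma split_op: "size (N0 + replicate_mset b e) = size (add_mset (Suc e) N0) + (b - 1)
  \<and> pv (N0 + replicate_mset b e) = pv (add_mset (Suc e) N0)"
  using b_gt by simp

lemma split1: assumes "wit N" "pv N > b ^ n" "size N < pv N"
  shows "\<exists>N1. size N1 = size N + (b - 1) \<and> pv N1 = pv N \<and> wit N1"
proof (cases "0 \<in># N")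
  case True
  have "\<exists>x\<in>#N. x \<noteq> 0"
  proof (rule ccontr)
    assume "\<not> (\<exists>x\<in>#N. x \<noteq> 0)"
    then have "pv N = size N" using pv_all0 by auto
    then show False using assms(3) by simp
  qed
  then obtain e where "Suc e \<in># N" by (metis not0_implies_Suc)
  then obtain N0 where N: "N = add_mset (Suc e) N0" by (metis multi_member_split)
  have "0 \<in># N0" using True N by auto
  then have "wit (N0 + replicate_mset b e)" by (simp add: wit_def)
  then show ?thesis using split_op[of N0 e] N by (intro exI[of _ "N0 + replicate_mset b e"]) simp
next
  case False
  then obtain w where w: "w \<in># N" "w \<ge> n" using assms(1) by (auto simp: wit_def)
  then obtain N0 where N: "N = add_mset w N0" by (metis multi_member_split)
  show ?thesis
  proof (cases "N0 = {#}")
    case True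
    then have "b ^ w > b ^ n" using assms(2) N by simp
    then have "w > n" by (rule power_less_imp_less_exp[OF b_gt])
    then obtain e where e: "w = Suc e" "e \<ge> n" by (cases w) auto
    have "wit (replicate_mset b e)" using e b_gt by (auto simp: wit_def)
    then show ?thesis using split_op[of "{#}" e] N True e by (intro exI[of _ "replicate_mset b e"]) simp
  next
    case False
    then obtain x where x: "x \<in># N0" by (meson multiset_nonemptyE)
    have "0 \<notin># N0" using N \<open>0 \<notin># N\<close> by auto
    then have "x \<noteq> 0" using x by metis
    then obtain e where "x = Suc e" by (metis not0_implies_Suc)
    then obtain N00 where N0: "N0 = add_mset (Suc e) N00" using x by (metis multi_member_split)
    have "wit (add_mset w N00 + replicate_mset b e)" using w by (auto simp: wit_def)
    moreover have "N = add_mset (Suc e) (add_mset w N00)" using N N0 by simp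
    ultimately show ?thesis using split_op[of "add_mset w N00" e]
      by (intro exI[of _ "add_mset w N00 + replicate_mset b e"]) simp
  qed
qed

lemma splitj: "wit N \<Longrightarrow> pv N > b ^ n \<Longrightarrow> size N + j * (b - 1) \<le> pv N \<Longrightarrow>
   \<exists>W. size W = size N + j * (b - 1) \<and> pv W = pv N \<and> wit W"
proof (induction j arbitrary: N)
  case 0 then show ?case by auto
next
  case (Suc j)
  have "b - 1 \<le> Suc j * (b - 1)" by simp
  then have "size N < pv N" using Suc.prems(3) b_gt by linarith
  from split1[OF Suc.prems(1,2) this] obtain N1
    where N1: "size N1 = size N + (b - 1)" "pv N1 = pv N" "wit N1" by blast
  have eqs: "size N1 + j * (b - 1) = size N + Suc j * (b - 1)" using N1(1) by simp
  then obtain W where "size W = size N1 + j * (b - 1)" "pv W = pv N1" "wit W"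
    using Suc.IH[of N1] N1 Suc.prems by auto
  then show ?case using eqs N1 by (intro exI[of _ W]) simp
qed

lemma core_lt:
  assumes ap: "\<not> (s \<ge> R \<and> s - R \<in> S)" and M1: "set_mset M1 \<subseteq> {..<n}" and M2: "set_mset M2 \<subseteq> {..<n}"
    and g1: "gsum M1 = s" and g2: "gsum M2 = s" and lt: "size M2 < size M1"
  shows False
proof -
  have nw: "\<not> wit W" if "gsum W = s" for W using witness[of s W] that ap by auto
  have z1: "0 \<notin># M1" using nw[OF g1] by (auto simp: wit_def)
  have z2: "0 \<notin># M2" using nw[OF g2] by (auto simp: wit_def)
  have pos1: "\<forall>e\<in>#M1. e \<ge> 1" using z1 by (metis leI less_one)
  have pos2: "\<forall>e\<in>#M2. e \<ge> 1" using z2 by (metis leI less_one)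
  define L1 L2 V1 V2 where "L1 = size M1" "L2 = size M2" "V1 = rsum M1" "V2 = rsum M2"
  have s1: "s = L1 * R + a * V1" using g1 gsum_sz by (simp add: L1_L2_V1_V2_def)
  have s2: "s = L2 * R + a * V2" using g2 gsum_sz by (simp add: L1_L2_V1_V2_def)
  obtain d where d: "L1 = L2 + d" "d > 0" using lt unfolding L1_L2_V1_V2_def by (metis less_imp_add_positive)
  have eq: "d * R + a * V1 = a * V2" using s1 s2 d by (simp add: algebra_simps)
  then have "d * R = a * (V2 - V1)" by (simp add: diff_mult_distrib2)
  then have "a dvd d * R" by simp
  moreover have "coprime a R" using cop by (simp add: coprime_commute)
  ultimately have "a dvd d" using coprime_dvd_mult_left_iff by blast
  then obtain t where t: "d = a * t" by (elim dvdE)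
  have tpos: "t \<ge> 1" using t d(2) by (cases t) auto
  have "a * (t * R + V1) = a * V2" using eq t by (simp add: algebra_simps)
  then have V: "V2 = V1 + t * R" using a_pos by simp
  define P1 P2 where "P1 = pv M1" "P2 = pv M2"
  have p1: "P1 = (b - 1) * V1 + L1" using pv_sz by (simp add: P1_P2_def L1_L2_V1_V2_def)
  have p2: "P2 = (b - 1) * V2 + L2" using pv_sz by (simp add: P1_P2_def L1_L2_V1_V2_def)
  have P1ge: "P1 \<ge> b * L1" using pv_ge[OF pos1] by (simp add: P1_P2_def L1_L2_V1_V2_def)
  have bn: "(b - 1) * R + 1 = b ^ n" using repunit_mult b_gt by simp
  have e1: "P2 + a * t = P1 + t * ((b - 1) * R)" using p1 p2 V d t by (simp add: algebra_simps)
  have e2: "t * ((b - 1) * R) + t = t * b ^ n" using bn by (metis add_mult_distrib2 mult.right_neutral)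
  have e3: "P1 \<ge> b * L2 + b * (a * t)" using P1ge d t by (simp add: algebra_simps)
  have e4: "b * (a * t) = a * t + (b - 1) * (a * t)" using b_gt by (simp add: algebra_simps)
  have e5: "(b - 1) * (a * t) \<ge> t" using b_gt a_pos
  proof -
    have "(b - 1) * a \<ge> 1" using b_gt a_pos by simp
    then have "t * 1 \<le> t * ((b - 1) * a)" by (rule mult_le_mono2)
    then show ?thesis by (simp add: ac_simps)
  qed
  have e6: "t * b ^ n \<ge> b ^ n" using tpos by simp
  have P2ge: "P2 \<ge> b * L2 + b ^ n" using e1 e2 e3 e4 e5 e6 by linarith
  have L2pos: "L2 \<ge> 1"
  proof (rule ccontr)
    assume "\<not> L2 \<ge> 1"
    then have "L2 = 0" by simp
    then have "s = 0" using s2 V d t e1 g2 L1_L2_V1_V2_def by simp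
    moreover have "s \<ge> R" using s1 d \<open>L2 = 0\<close> by (simp add: trans_le_add1)
    ultimately show False using R_pos by simp
  qed
  have bL2: "b * L2 \<ge> b" using L2pos by simp
  have P2gt: "pv M2 > b ^ n" using bL2 P2ge b_gt unfolding P1_P2_def by linarith
  have L2b: "L2 \<le> b * L2" using b_gt by simp
  have L2le: "size M2 \<le> pv M2" using L2b P2ge unfolding P1_P2_def L1_L2_V1_V2_def by linarith
  obtain N j where N: "\<forall>e\<in>#N. e \<ge> 1" "pv N = pv M2" "size M2 = size N + j * (b - 1)" "\<exists>e\<in>#N. e \<ge> n"
    using merge[OF pos2 P2gt] by blast
  have "wit N" using N(4) by (simp add: wit_def)
  then obtain W where W: "size W = size M2" "pv W = pv M2" "wit W"
    using splitj[of N j] N P2gt L2le by auto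
  have "(b - 1) * gsum W + a * size W = (b - 1) * gsum M2 + a * size M2"
    using gsum_pv[of W] gsum_pv[of M2] W by simp
  then have "(b - 1) * gsum W = (b - 1) * gsum M2" using W by simp
  then have "gsum W = s" using b_gt g2 by simp
  then show False using nw W(3) by blast
qed

lemma min_gens_eq: "min_gens S = h ` {..<n}"
proof (rule set_eqI, rule iffI)
  fix x assume x: "x \<in> min_gens S"
  then have xS: "x \<in> S" "x \<noteq> 0" and nd: "\<not>(\<exists>y\<in>S. \<exists>z\<in>S. y \<noteq> 0 \<and> z \<noteq> 0 \<and> x = y + z)"
    by (auto simp: min_gens_def)
  obtain X where X: "set_mset X \<subseteq> {..<n}" "x = gsum X" using S_elem_red xS by blast
  obtain e X' where X': "X = add_mset e X'" using X xS by (cases X) auto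
  have "X' = {#}"
  proof (rule ccontr)
    assume "X' \<noteq> {#}"
    then obtain f X'' where "X' = add_mset f X''" by (cases X') auto
    then have "gsum X' \<noteq> 0" using h_ge[of f] R_pos by simp
    moreover have "h e \<noteq> 0" using h_ge[of e] R_pos by simp
    moreover have "x = h e + gsum X'" using X X' by simp
    ultimately show False using nd h_in_S[of e] gsum_in_S[of X'] by blast
  qed
  then show "x \<in> h ` {..<n}" using X X' by auto
next
  fix x assume "x \<in> h ` {..<n}"
  then obtain e where e: "e < n" "x = h e" by auto
  have hne: "h e \<noteq> 0" using h_ge[of e] R_pos by simp
  have "\<not> (\<exists>y\<in>S. \<exists>z\<in>S. y \<noteq> 0 \<and> z \<noteq> 0 \<and> x = y + z)"
  proof
    assume "\<exists>y\<in>S. \<exists>z\<in>S. y \<noteq> 0 \<and> z \<noteq> 0 \<and> x = y + z"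
    then obtain y z where yz: "y \<in> S" "z \<in> S" "y \<noteq> 0" "z \<noteq> 0" "x = y + z" by blast
    obtain Y where Y: "y = gsum Y" using S_elem yz by blast
    obtain Z where Z: "z = gsum Z" using S_elem yz by blast
    have "Y \<noteq> {#}" "Z \<noteq> {#}" using Y Z yz by auto
    then have "size Y \<ge> 1" "size Z \<ge> 1" by (auto simp: Suc_le_eq nonempty_has_size)
    define m where "m = size (Y + Z)"
    define V where "V = rsum (Y + Z)"
    have m2: "m \<ge> 2" using \<open>size Y \<ge> 1\<close> \<open>size Z \<ge> 1\<close> by (simp add: m_def)
    have "R + a * repunit b e = m * R + a * V"
      using e yz Y Z gsum_sz[of "Y + Z"] by (simp add: h_def m_def V_def)
    then obtain k where k: "m = Suc k" "k \<ge> 1" "a * repunit b e = k * R + a * V"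
      using m2 by (cases m) auto
    then have "k * R = a * (repunit b e - V)" by (simp add: diff_mult_distrib2)
    then have "a dvd k * R" by simp
    moreover have "coprime a R" using cop by (simp add: coprime_commute)
    ultimately have "a dvd k" using coprime_dvd_mult_left_iff by blast
    then have "a \<le> k" using k(2) by (simp add: dvd_imp_le)
    then have "a * R \<le> k * R" by (rule mult_le_mono1)
    then have "a * R \<le> a * repunit b e" using k(3) by linarith
    then have "R \<le> repunit b e" using a_pos by simp
    moreover have "repunit b e < R" using repunit_less[of b e n] b_gt e by simp
    ultimately show False by simp
  qed
  then show "x \<in> min_gens S" using h_in_S[of e] e hne by (simp add: min_gens_def)
qed

lemma homog: "homogeneous S"
  unfolding homogeneous_def
proof
  fix s assume "s \<in> apery S"
  then have sS: "s \<in> S" and ap: "\<not> (s \<ge> R \<and> s - R \<in> S)" by (auto simp: apery_def mult_eq)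
  obtain X where X: "set_mset X \<subseteq> {..<n}" "s = gsum X" using S_elem_red sS by blast
  have inj: "inj_on h {..<n}"
  proof (rule inj_onI)
    fix x y assume "h x = h y"
    then show "x = y" by (cases x y rule: linorder_cases) (auto dest: h_mono)
  qed
  have reidx: "(\<Sum>g\<in>h`{..<n}. f g) = (\<Sum>e<n. f (h e))" for f :: "nat \<Rightarrow> nat"
    using sum.reindex[OF inj] by simp
  have eqsz: "size Y = size X" if "set_mset Y \<subseteq> {..<n}" "gsum Y = s" for Y
  proof (cases "size Y" "size X" rule: linorder_cases)
    case less then show ?thesis using core_lt[OF ap X(1) that(1) X(2)[symmetric] that(2)] by blast
  next
    case greater then show ?thesis using core_lt[OF ap that(1) X(1) that(2) X(2)[symmetric]] by blast
  qed
  have szX: "size X = (\<Sum>e<n. count X e)"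
  proof -
    have "size X = sum_mset (image_mset (\<lambda>_. 1::nat) X)" by (rule size_as_sum)
    also have "\<dots> = (\<Sum>e<n. count X e * 1)" by (rule mset_sum_count) (use X(1) in auto)
    also have "\<dots> = (\<Sum>e<n. count X e)" by simp
    finally show ?thesis .
  qed
  have gX: "gsum X = (\<Sum>e<n. count X e * h e)"
    using mset_sum_count[of "{..<n}" X h] X(1) by (simp add: gsum_def)
  have "lengths S s = {size X}"
  proof (rule set_eqI, rule iffI)
    fix l assume "l \<in> lengths S s"
    then obtain u where u: "l = (\<Sum>g\<in>min_gens S. u g)" "s = (\<Sum>g\<in>min_gens S. u g * g)"
      unfolding lengths_def by blast
    define Y where "Y = (\<Sum>e<n. replicate_mset (u (h e)) e)"
    have mb1: "sum_mset (image_mset h Y) = (\<Sum>e<n. u (h e) * h e)" "set_mset Y \<subseteq> {..<n}"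
      unfolding Y_def by (rule conjunct1[OF mset_build], rule conjunct2[OF mset_build])
    have mb2: "sum_mset (image_mset (\<lambda>_. 1::nat) Y) = (\<Sum>e<n. u (h e) * 1)"
      unfolding Y_def by (rule conjunct1[OF mset_build])
    have "size Y = (\<Sum>e<n. u (h e))"
    proof -
      have "size Y = sum_mset (image_mset (\<lambda>_. 1::nat) Y)" by (rule size_as_sum)
      also have "\<dots> = (\<Sum>e<n. u (h e) * 1)" by (rule mb2)
      finally show ?thesis by simp
    qed
    moreover have "l = (\<Sum>e<n. u (h e))" using u(1) by (simp only: min_gens_eq reidx)
    ultimately have "l = size Y" by simp
    moreover have "gsum Y = s" using u(2) mb1(1) by (simp only: min_gens_eq reidx gsum_def)
    ultimately show "l \<in> {size X}" using eqsz mb1(2) by simp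
  next
    fix l assume "l \<in> {size X}"
    then have l: "l = size X" by simp
    define u where "u = (\<lambda>x. count X (inv_into {..<n} h x))"
    have ue: "u (h e) = count X e" if "e < n" for e
      using inv_into_f_f[OF inj] that by (simp add: u_def)
    have "(\<Sum>g\<in>min_gens S. u g) = (\<Sum>e<n. u (h e))" by (simp only: min_gens_eq reidx)
    also have "\<dots> = (\<Sum>e<n. count X e)" by (rule sum.cong) (auto simp: ue)
    finally have 1: "l = (\<Sum>g\<in>min_gens S. u g)" using l szX by simp
    have "(\<Sum>g\<in>min_gens S. u g * g) = (\<Sum>e<n. u (h e) * h e)" by (simp only: min_gens_eq reidx)
    also have "\<dots> = (\<Sum>e<n. count X e * h e)" by (rule sum.cong) (auto simp: ue)
    finally have 2: "s = (\<Sum>g\<in>min_gens S. u g * g)" using X(2) gX by simp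
    show "l \<in> lengths S s" unfolding lengths_def using 1 2 by blast
  qed
  then show "\<exists>l. lengths S s = {l}" by blast
qed

end

theorem proposition17:
  fixes a b n :: nat
  assumes "a > 0" and "b > 1" and "n > 1" and "coprime (repunit b n) a"
  shows "homogeneous (S_abn a b n)"
proof -
  interpret RS a b n using assms by unfold_locales
  show ?thesis by (rule homog)
qed

end
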